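(* Let $S,T\subseteq\mathbb{Z}_{>0}$ be finite with $T\preceq S$ and $|T|>|S|$. Let $y\in T$ be the smallest element such that $T\setminus\{y\}\preceq S$. Then: (1) for every $j$ with $T(j)<y$, $(T\triangleleft S)(j)=T(j)$; (2) $y\notin T\triangleleft S$; (3) for every $S'\subseteq S$, $(T\setminus\{y\})\triangleleft S'=T\triangleleft S'$.
   Context: For a finite set $S\subseteq\mathbb{Z}_{>0}$, $S(i)$ denotes its $i$th smallest element. $T\preceq S$ means $|T|\ge|S|$ and $T(i)<S(i)$ for all $i\in[|S|]$. For finite $S,T$, $T\triangleleft S$ is computed by going through $S$ from largest to smallest; each $s$ picks the largest element of $T$ less than $s$ not yet picked (if one exists); $T\triangleleft S$ is the set of picked elements. *)

theory Defs
  imports Main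
begin

text \<open>S(i): the i-th smallest element of a finite set S, 1-indexed (meaningful for 1 <= i <= card S).\<close>
definition nth_el :: "nat set \<Rightarrow> nat \<Rightarrow> nat" where
  "nth_el S i = sorted_list_of_set S ! (i - 1)"

definition preceq :: "nat set \<Rightarrow> nat set \<Rightarrow> bool" where
  "preceq T S \<longleftrightarrow> card T \<ge> card S \<and> (\<forall>i\<in>{1..card S}. nth_el T i < nth_el S i)"

fun pick :: "nat list \<Rightarrow> nat set \<Rightarrow> nat set" where
  "pick [] A = {}"
| "pick (s # ss) A =
     (if \<exists>t\<in>A. t < s
      then (let t = Max {t\<in>A. t < s} in insert t (pick ss (A - {t})))
      else pick ss A)"

definition tri :: "nat set \<Rightarrow> nat set \<Rightarrow> nat set" where
  "tri T S = pick (rev (sorted_list_of_set S)) T"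

end

theory Submission
  imports Defs
begin

definition cnt :: "nat set \<Rightarrow> nat \<Rightarrow> nat" where
  "cnt X x = card {a\<in>X. a < x}"

lemma sl_cnt:
  assumes "finite X" "i < card X"
  shows "cnt X (sorted_list_of_set X ! i) = i"
proof -
  define xs where "xs = sorted_list_of_set X"
  have st: "sorted_wrt (<) xs" using assms(1) strict_sorted_list_of_set xs_def by auto
  have len: "length xs = card X" using xs_def by simp
  have sx: "set xs = X" using assms(1) xs_def by simp
  have dist: "distinct xs" using xs_def by simp
  have "{a\<in>X. a < xs ! i} = (\<lambda>j. xs ! j) ` {..<i}"
  proof
    show "{a \<in> X. a < xs ! i} \<subseteq> (!) xs ` {..<i}"
    proof
      fix a assume a: "a \<in> {a \<in> X. a < xs ! i}"
      then obtain j where j: "j < length xs" "a = xs ! j" using sx by (auto simp: in_set_conv_nth)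
      have "j < i"
      proof (rule ccontr)
        assume "\<not> j < i"
        then have "xs ! i \<le> xs ! j" using st j assms len
          by (metis le_neq_implies_less linorder_not_less order.strict_implies_order sorted_wrt_nth_less)
        then show False using a j by auto
      qed
      then show "a \<in> (!) xs ` {..<i}" using j by auto
    qed
  next
    show "(!) xs ` {..<i} \<subseteq> {a \<in> X. a < xs ! i}"
      using st assms len sx by (auto intro: sorted_wrt_nth_less)
  qed
  moreover have "inj_on (\<lambda>j. xs ! j) {..<i}"
    using dist assms len by (auto simp: inj_on_def nth_eq_iff_index_eq)
  ultimately show ?thesis unfolding cnt_def xs_def[symmetric] by (simp add: card_image)
qed

lemma nth_el_cnt:
  assumes "finite X" "x \<in> X"
  shows "nth_el X (cnt X x + 1) = x" "cnt X x < card X"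
proof -
  obtain i where i: "i < card X" "x = sorted_list_of_set X ! i"
    using assms by (metis in_set_conv_nth length_sorted_list_of_set set_sorted_list_of_set)
  then show "nth_el X (cnt X x + 1) = x" "cnt X x < card X"
    using sl_cnt[OF assms(1) i(1)] by (auto simp: nth_el_def)
qed

lemma nth_el_in:
  assumes "finite X" "1 \<le> i" "i \<le> card X"
  shows "nth_el X i \<in> X" "cnt X (nth_el X i) = i - 1"
proof -
  have l: "i - 1 < length (sorted_list_of_set X)" using assms by simp
  have "sorted_list_of_set X ! (i - 1) \<in> set (sorted_list_of_set X)" using l by (rule nth_mem)
  then show "nth_el X i \<in> X" using assms(1) unfolding nth_el_def by simp
  show "cnt X (nth_el X i) = i - 1" unfolding nth_el_def using sl_cnt[OF assms(1)] assms by simp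
qed

lemma cnt_mono: "finite X \<Longrightarrow> a \<le> b \<Longrightarrow> cnt X a \<le> cnt X b"
  unfolding cnt_def by (rule card_mono) auto

lemma nth_el_less_iff:
  assumes "finite X" "1 \<le> i" "i \<le> card X"
  shows "nth_el X i < x \<longleftrightarrow> i \<le> cnt X x"
proof
  assume h: "nth_el X i < x"
  have "{a\<in>X. a < nth_el X i} \<union> {nth_el X i} \<subseteq> {a\<in>X. a < x}"
    using h nth_el_in[OF assms] by auto
  then have "card ({a\<in>X. a < nth_el X i} \<union> {nth_el X i}) \<le> cnt X x"
    unfolding cnt_def using assms(1) by (intro card_mono) auto
  then show "i \<le> cnt X x" using nth_el_in[OF assms] assms(1) unfolding cnt_def by simp
next
  assume h: "i \<le> cnt X x"
  show "nth_el X i < x"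
  proof (rule ccontr)
    assume "\<not> nth_el X i < x"
    then have "cnt X x \<le> cnt X (nth_el X i)" using cnt_mono assms(1) by auto
    then show False using h nth_el_in[OF assms] assms by auto
  qed
qed

lemma pick_sub: "pick ss A \<subseteq> A"
proof (induction ss arbitrary: A)
  case Nil then show ?case by simp
next
  case (Cons s ss)
  show ?case
  proof (cases "\<exists>t\<in>A. t < s")
    case True
    define t0 where "t0 = Max {t\<in>A. t < s}"
    have "finite {t\<in>A. t < s}" by (rule finite_subset[of _ "{..<s}"]) auto
    then have "t0 \<in> A" using True unfolding t0_def using Max_in[of "{t\<in>A. t < s}"] by auto
    then show ?thesis using True Cons.IH[of "A - {t0}"] by (auto simp: Let_def t0_def[symmetric])
  next
    case False then show ?thesis using Cons.IH[of A] by auto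
  qed
qed

lemma pick_unpicked:
  assumes "sorted_wrt (>) ss" "t \<in> A"
    "\<forall>u. card {x\<in>set ss. t<x \<and> x\<le>u} \<le> card {a\<in>A. t<a \<and> a<u}"
  shows "t \<notin> pick ss A"
  using assms
proof (induction ss arbitrary: A)
  case Nil then show ?case by simp
next
  case (Cons s ss)
  have srt: "sorted_wrt (>) ss" and lt: "\<forall>x\<in>set ss. x < s" using Cons.prems(1) by auto
  have fin: "\<And>u P. finite {a\<in>A. P a \<and> a<u}" by (rule finite_subset[of _ "{..<u}" for u]) auto
  have fin2: "\<And>P. finite {x\<in>set (s#ss). P x}" by auto
  show ?case
  proof (cases "\<exists>t\<in>A. t < s")
    case True
    define t0 where "t0 = Max {t\<in>A. t < s}"
    have fB: "finite {t\<in>A. t < s}" by (rule finite_subset[of _ "{..<s}"]) auto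
    have "t0 \<in> {t\<in>A. t < s}" using True Max_in[OF fB] unfolding t0_def by blast
    then have t0A: "t0 \<in> A" and t0s: "t0 < s" by auto
    have t0max: "\<And>a. a \<in> A \<Longrightarrow> a < s \<Longrightarrow> a \<le> t0" unfolding t0_def using fB by auto
    have H: "\<And>u. card {x\<in>set (s#ss). t<x \<and> x\<le>u} \<le> card {a\<in>A. t<a \<and> a<u}"
      using Cons.prems(3) by blast
    have ne: "t0 \<noteq> t"
    proof
      assume e: "t0 = t"
      have "{a\<in>A. t<a \<and> a<s} = {}" using t0max e by force
      then have "card {a\<in>A. t<a \<and> a<s} = 0" by simp
      moreover have "s \<in> {x\<in>set (s#ss). t<x \<and> x\<le>s}" using e t0s by auto
      then have "card {x\<in>set (s#ss). t<x \<and> x\<le>s} \<ge> 1"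
        using fin2[of "\<lambda>x. t < x \<and> x \<le> s"] by (metis One_nat_def Suc_leI card_gt_0_iff empty_iff)
      ultimately show False using H[of s] by linarith
    qed
    have "t \<notin> pick ss (A - {t0})"
    proof (rule Cons.IH[OF srt])
      show "t \<in> A - {t0}" using ne Cons.prems(2) by auto
      show "\<forall>u. card {x\<in>set ss. t<x \<and> x\<le>u} \<le> card {a\<in>A - {t0}. t<a \<and> a<u}"
      proof
        fix u
        have m1: "card {x\<in>set ss. t<x \<and> x\<le>u} \<le> card {x\<in>set (s#ss). t<x \<and> x\<le>u}"
          by (rule card_mono) auto
        show "card {x\<in>set ss. t<x \<and> x\<le>u} \<le> card {a\<in>A - {t0}. t<a \<and> a<u}"
        proof (cases "t0 < t \<or> u \<le> t0")
          case True
          then have "{a\<in>A - {t0}. t<a \<and> a<u} = {a\<in>A. t<a \<and> a<u}" by auto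
          then show ?thesis using m1 H[of u] by simp
        next
          case False
          then have tt0: "t < t0" "t0 < u" using ne by auto
          have eA: "{a\<in>A - {t0}. t<a \<and> a<u} = {a\<in>A. t<a \<and> a<u} - {t0}" by auto
          have cA: "card {a\<in>A - {t0}. t<a \<and> a<u} = card {a\<in>A. t<a \<and> a<u} - 1"
            unfolding eA using tt0 t0A fin by (subst card_Diff_singleton) auto
          show ?thesis
          proof (cases "s \<le> u")
            case True
            have "{x\<in>set ss. t<x \<and> x\<le>u} = {x\<in>set (s#ss). t<x \<and> x\<le>u} - {s}"
              using lt by auto
            then have "card {x\<in>set ss. t<x \<and> x\<le>u} = card {x\<in>set (s#ss). t<x \<and> x\<le>u} - 1"
              using True tt0 t0s by (simp add: card_Diff_singleton)
            then show ?thesis using cA H[of u] by simp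
          next
            case False
            have "insert s {x\<in>set ss. t<x \<and> x\<le>u} \<subseteq> {x\<in>set (s#ss). t<x \<and> x\<le>s}"
              using False tt0 t0s by auto
            then have "card (insert s {x\<in>set ss. t<x \<and> x\<le>u}) \<le> card {x\<in>set (s#ss). t<x \<and> x\<le>s}"
              by (intro card_mono) auto
            moreover have "s \<notin> {x\<in>set ss. t<x \<and> x\<le>u}" using lt by auto
            ultimately have "card {x\<in>set ss. t<x \<and> x\<le>u} + 1 \<le> card {a\<in>A. t<a \<and> a<s}"
              using H[of s] by simp
            moreover have "{a\<in>A. t<a \<and> a<s} = {a\<in>A. t<a \<and> a<u}"
              using t0max tt0 False by force
            ultimately show ?thesis using cA by simp
          qed
        qed
      qed
    qed
    then show ?thesis using True ne by (simp add: Let_def t0_def[symmetric])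
  next
    case False
    have "t \<notin> pick ss A"
    proof (rule Cons.IH[OF srt Cons.prems(2)])
      show "\<forall>u. card {x\<in>set ss. t<x \<and> x\<le>u} \<le> card {a\<in>A. t<a \<and> a<u}"
      proof
        fix u
        have "card {x\<in>set ss. t<x \<and> x\<le>u} \<le> card {x\<in>set (s#ss). t<x \<and> x\<le>u}"
          by (rule card_mono) auto
        then show "card {x\<in>set ss. t<x \<and> x\<le>u} \<le> card {a\<in>A. t<a \<and> a<u}"
          using Cons.prems(3) le_trans by blast
      qed
    qed
    then show ?thesis using False by simp
  qed
qed


lemma pick_picked:
  assumes "sorted_wrt (>) ss" "t \<in> A"
    "card {a\<in>A. t<a \<and> a<u} < card {x\<in>set ss. t<x \<and> x\<le>u}"
  shows "t \<in> pick ss A"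
  using assms
proof (induction ss arbitrary: A)
  case Nil then show ?case by simp
next
  case (Cons s ss)
  have srt: "sorted_wrt (>) ss" and lt: "\<forall>x\<in>set ss. x < s" using Cons.prems(1) by auto
  have fin: "\<And>u P. finite {a\<in>A. P a \<and> a<u}" by (rule finite_subset[of _ "{..<u}" for u]) auto
  have H: "card {a\<in>A. t<a \<and> a<u} < card {x\<in>set (s#ss). t<x \<and> x\<le>u}"
    using Cons.prems(3) by blast
  show ?case
  proof (cases "\<exists>t\<in>A. t < s")
    case True
    define t0 where "t0 = Max {t\<in>A. t < s}"
    have fB: "finite {t\<in>A. t < s}" by (rule finite_subset[of _ "{..<s}"]) auto
    have "t0 \<in> {t\<in>A. t < s}" using True Max_in[OF fB] unfolding t0_def by blast
    then have t0A: "t0 \<in> A" and t0s: "t0 < s" by auto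
    have t0max: "\<And>a. a \<in> A \<Longrightarrow> a < s \<Longrightarrow> a \<le> t0" unfolding t0_def using fB by auto
    show ?thesis
    proof (cases "t0 = t")
      case True
      then show ?thesis using \<open>\<exists>t\<in>A. t < s\<close> by (simp add: Let_def t0_def[symmetric])
    next
      case ne: False
      have tt0: "t < t0"
      proof (rule ccontr)
        assume "\<not> t < t0"
        then have "t0 < t" using ne by auto
        then have "\<not> t < s" using t0max Cons.prems(2) by force
        then have "{x\<in>set (s#ss). t<x \<and> x\<le>u} = {}" using lt by auto
        then show False using H by (metis card.empty less_nat_zero_code)
      qed
      have "t \<in> pick ss (A - {t0})"
      proof (rule Cons.IH[OF srt])
        show "t \<in> A - {t0}" using ne Cons.prems(2) by auto
        show "card {a\<in>A - {t0}. t<a \<and> a<u} < card {x\<in>set ss. t<x \<and> x\<le>u}"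
        proof (cases "u \<le> t0")
          case True
          then have "{a\<in>A - {t0}. t<a \<and> a<u} = {a\<in>A. t<a \<and> a<u}" by auto
          moreover have "{x\<in>set ss. t<x \<and> x\<le>u} = {x\<in>set (s#ss). t<x \<and> x\<le>u}"
            using True t0s by auto
          ultimately show ?thesis using H by simp
        next
          case False
          have eA: "{a\<in>A - {t0}. t<a \<and> a<u} = {a\<in>A. t<a \<and> a<u} - {t0}" by auto
          have cA: "card {a\<in>A - {t0}. t<a \<and> a<u} = card {a\<in>A. t<a \<and> a<u} - 1"
            unfolding eA using tt0 False t0A fin by (subst card_Diff_singleton) auto
          have pos: "card {a\<in>A. t<a \<and> a<u} \<ge> 1"
            using tt0 False t0A fin[where u=u and P="\<lambda>a. t<a"]
            by (metis (no_types, lifting) One_nat_def Suc_leI card_gt_0_iff empty_iff mem_Collect_eq not_le)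
          have "{x\<in>set (s#ss). t<x \<and> x\<le>u} - {s} \<subseteq> {x\<in>set ss. t<x \<and> x\<le>u}" by auto
          then have "card ({x\<in>set (s#ss). t<x \<and> x\<le>u} - {s}) \<le> card {x\<in>set ss. t<x \<and> x\<le>u}"
            by (intro card_mono) auto
          moreover have "card {x\<in>set (s#ss). t<x \<and> x\<le>u} - 1 \<le> card ({x\<in>set (s#ss). t<x \<and> x\<le>u} - {s})"
            using diff_card_le_card_Diff[of "{s}"] by simp
          ultimately show ?thesis using cA H pos by linarith
        qed
      qed
      then show ?thesis using \<open>\<exists>t\<in>A. t < s\<close> by (simp add: Let_def t0_def[symmetric])
    qed
  next
    case False
    then have "\<not> t < s" using Cons.prems(2) by auto
    then have "{x\<in>set ss. t<x \<and> x\<le>u} = {x\<in>set (s#ss). t<x \<and> x\<le>u}" by auto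
    then have "t \<in> pick ss A" using Cons.IH[OF srt Cons.prems(2)] H by simp
    then show ?thesis using False by simp
  qed
qed

lemma pick_remove:
  assumes "y \<notin> pick ss A"
  shows "pick ss (A - {y}) = pick ss A"
  using assms
proof (induction ss arbitrary: A)
  case Nil then show ?case by simp
next
  case (Cons s ss)
  show ?case
  proof (cases "\<exists>t\<in>A. t < s")
    case True
    define t0 where "t0 = Max {t\<in>A. t < s}"
    have fB: "finite {t\<in>A. t < s}" by (rule finite_subset[of _ "{..<s}"]) auto
    have "t0 \<in> {t\<in>A. t < s}" using True Max_in[OF fB] unfolding t0_def by blast
    then have t0A: "t0 \<in> A" and t0s: "t0 < s" by auto
    have P: "pick (s#ss) A = insert t0 (pick ss (A - {t0}))"
      using True by (simp add: Let_def t0_def[symmetric])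
    then have ne: "t0 \<noteq> y" and ny: "y \<notin> pick ss (A - {t0})" using Cons.prems by auto
    have ex: "\<exists>t\<in>A - {y}. t < s" using t0A t0s ne by auto
    have "{t\<in>A - {y}. t < s} = {t\<in>A. t < s} - {y}" by auto
    have M: "Max {t\<in>A - {y}. t < s} = t0"
    proof (rule Max_eqI)
      show "finite {t\<in>A - {y}. t < s}" using fB by auto
      show "\<And>a. a \<in> {t\<in>A - {y}. t < s} \<Longrightarrow> a \<le> t0" unfolding t0_def using fB by auto
      show "t0 \<in> {t\<in>A - {y}. t < s}" using t0A t0s ne by auto
    qed
    have "pick (s#ss) (A - {y}) = insert t0 (pick ss (A - {y} - {t0}))"
      using ex M by (simp add: Let_def)
    also have "A - {y} - {t0} = (A - {t0}) - {y}" by auto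
    also have "pick ss ((A - {t0}) - {y}) = pick ss (A - {t0})" using Cons.IH[OF ny] .
    finally show ?thesis using P by simp
  next
    case False
    then have "\<not> (\<exists>t\<in>A - {y}. t < s)" by auto
    then show ?thesis using False Cons.IH[of A] Cons.prems by simp
  qed
qed


lemma preceq_cnt:
  assumes "finite X" "finite S" "card S \<le> card X"
  shows "preceq X S \<longleftrightarrow> (\<forall>s\<in>S. cnt S s < cnt X s)"
proof -
  have "(\<forall>i\<in>{1..card S}. nth_el X i < nth_el S i) \<longleftrightarrow> (\<forall>s\<in>S. cnt S s < cnt X s)"
  proof
    assume h: "\<forall>i\<in>{1..card S}. nth_el X i < nth_el S i"
    show "\<forall>s\<in>S. cnt S s < cnt X s"
    proof
      fix s assume s: "s \<in> S"
      have i: "cnt S s + 1 \<in> {1..card S}" using nth_el_cnt[OF assms(2) s] by auto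
      then have "nth_el X (cnt S s + 1) < s" using h nth_el_cnt[OF assms(2) s] by metis
      then have "cnt S s + 1 \<le> cnt X s" using nth_el_less_iff[OF assms(1)] i assms(3) by auto
      then show "cnt S s < cnt X s" by simp
    qed
  next
    assume h: "\<forall>s\<in>S. cnt S s < cnt X s"
    show "\<forall>i\<in>{1..card S}. nth_el X i < nth_el S i"
    proof
      fix i assume i: "i \<in> {1..card S}"
      then have "nth_el S i \<in> S" "cnt S (nth_el S i) = i - 1" using nth_el_in[OF assms(2)] by auto
      then have "i \<le> cnt X (nth_el S i)" using h i by fastforce
      then show "nth_el X i < nth_el S i" using nth_el_less_iff[OF assms(1)] i assms(3) by auto
    qed
  qed
  then show ?thesis unfolding preceq_def using assms(3) by auto
qed

lemma cnt_remove:
  assumes "finite X" "z \<in> X"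
  shows "cnt (X - {z}) x = cnt X x - (if z < x then 1 else 0)"
proof -
  have "{a\<in>X - {z}. a < x} = {a\<in>X. a < x} - {z}" by auto
  then show ?thesis unfolding cnt_def using assms by (auto simp: card_Diff_singleton)
qed

lemma cnt_Suc:
  assumes "finite X"
  shows "cnt X (Suc x) = cnt X x + (if x \<in> X then 1 else 0)"
proof -
  have "{a\<in>X. a < Suc x} = {a\<in>X. a < x} \<union> (if x \<in> X then {x} else {})" by (auto simp: less_Suc_eq)
  then show ?thesis unfolding cnt_def using assms by auto
qed

lemma cnt_interval:
  assumes "finite X" "a \<le> b"
  shows "card {x\<in>X. a \<le> x \<and> x < b} = cnt X b - cnt X a"
proof -
  have "{x\<in>X. x < b} = {x\<in>X. x < a} \<union> {x\<in>X. a \<le> x \<and> x < b}" using assms by auto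
  moreover have "{x\<in>X. x < a} \<inter> {x\<in>X. a \<le> x \<and> x < b} = {}" by auto
  ultimately have "cnt X b = cnt X a + card {x\<in>X. a \<le> x \<and> x < b}"
    unfolding cnt_def using assms(1) by (simp add: card_Un_disjoint)
  then show ?thesis by simp
qed


theorem lemma4p17:
  fixes S T :: "nat set" and y :: nat
  assumes "finite S" and "finite T"
    and "0 \<notin> S" and "0 \<notin> T"
    and "preceq T S" and "card T > card S"
    and "y \<in> T" and "preceq (T - {y}) S"
    and "\<forall>z\<in>T. preceq (T - {z}) S \<longrightarrow> y \<le> z"
  shows "(\<forall>j\<in>{1..card T}. nth_el T j < y \<longrightarrow>
            j \<le> card (tri T S) \<and> nth_el (tri T S) j = nth_el T j)
         \<and> y \<notin> tri T S
         \<and> (\<forall>S'. S' \<subseteq> S \<longrightarrow> tri (T - {y}) S' = tri T S')"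
proof -
  note fS = assms(1) and fT = assms(2) and yT = assms(7)
  have cardrm: "\<And>z. z \<in> T \<Longrightarrow> card S \<le> card (T - {z})" using assms(6) fT by auto
  have H1: "\<forall>s\<in>S. cnt S s < cnt T s"
    using assms(5) preceq_cnt[OF fT fS] assms(6) by auto
  have H2: "\<forall>s\<in>S. cnt S s < cnt T s - (if y < s then 1 else 0)"
    using assms(8) preceq_cnt[OF _ fS cardrm[OF yT]] fT cnt_remove[OF fT yT] by auto
  have H3: "\<exists>s\<in>S. z < s \<and> cnt T s = cnt S s + 1" if z: "z \<in> T" "z < y" for z
  proof -
    have "\<not> preceq (T - {z}) S" using assms(9) z by auto
    then obtain s where s: "s \<in> S" "\<not> cnt S s < cnt T s - (if z < s then 1 else 0)"
      using preceq_cnt[OF _ fS cardrm[OF z(1)]] fT cnt_remove[OF fT z(1)] by auto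
    then show ?thesis using H1 by (intro bexI[of _ s]) (auto split: if_splits)
  qed
  have C: "cnt T y \<le> cnt S (Suc y)"
  proof (cases "cnt T y = 0")
    case False
    then have ne: "{a\<in>T. a < y} \<noteq> {}" unfolding cnt_def by auto
    have fin: "finite {a\<in>T. a < y}" using fT by auto
    define z where "z = Max {a\<in>T. a < y}"
    have "z \<in> {a\<in>T. a < y}" unfolding z_def using Max_in[OF fin ne] .
    then obtain s where s: "s \<in> S" "z < s" "cnt T s = cnt S s + 1" using H3 by auto
    have sy: "s \<le> y"
    proof (rule ccontr)
      assume "\<not> s \<le> y"
      then have "cnt S s < cnt T s - 1" using H2 s(1) by fastforce
      then show False using s(3) by simp
    qed
    have "{a\<in>T. a < y} \<subseteq> {a\<in>T. a < s}"
    proof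
      fix a assume a: "a \<in> {a\<in>T. a < y}"
      then have "a \<le> z" unfolding z_def using fin by simp
      then show "a \<in> {a\<in>T. a < s}" using a s(2) by simp
    qed
    then have "cnt T y \<le> cnt T s" unfolding cnt_def using fT by (intro card_mono) auto
    moreover have "cnt S (Suc s) \<le> cnt S (Suc y)" using cnt_mono[OF fS] sy by auto
    ultimately show ?thesis using s cnt_Suc[OF fS, of s] by simp
  qed simp
  have D: "cnt S (Suc x) \<le> cnt T x" for x
  proof (cases "{s\<in>S. s \<le> x} = {}")
    case True
    then have "cnt S (Suc x) = 0" unfolding cnt_def by (auto simp: less_Suc_eq_le)
    then show ?thesis by simp
  next
    case False
    have fin: "finite {s\<in>S. s \<le> x}" using fS by auto
    define s0 where "s0 = Max {s\<in>S. s \<le> x}"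
    have s0: "s0 \<in> S" "s0 \<le> x" using Max_in[OF fin False] unfolding s0_def by auto
    have "{a\<in>S. a < Suc x} = {a\<in>S. a < Suc s0}" using fin s0 unfolding s0_def
      by (auto simp: less_Suc_eq_le)
    then have "cnt S (Suc x) = cnt S s0 + 1" unfolding cnt_def using cnt_Suc[OF fS, of s0] s0
      by (simp add: cnt_def)
    also have "\<dots> \<le> cnt T s0" using H1 s0 by auto
    also have "\<dots> \<le> cnt T x" using cnt_mono[OF fT] s0 by auto
    finally show ?thesis .
  qed
  have Ap: "card {x\<in>S'. y<x \<and> x\<le>u} \<le> card {a\<in>T. y<a \<and> a<u}" if "S' \<subseteq> S" for S' u
  proof -
    define E where "E = {s\<in>S. y<s \<and> s\<le>u}"
    have finE: "finite E" unfolding E_def using fS by auto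
    have "card {x\<in>S'. y<x \<and> x\<le>u} \<le> card E" unfolding E_def
      using that finE[unfolded E_def] by (intro card_mono) auto
    moreover have "card E \<le> card {a\<in>T. y<a \<and> a<u}"
    proof (cases "E = {}")
      case False
      define sm where "sm = Max E"
      have sm: "sm \<in> S" "y < sm" "sm \<le> u" using Max_in[OF finE False] unfolding sm_def E_def by auto
      have "E = {x\<in>S. Suc y \<le> x \<and> x < Suc sm}"
      proof
        show "E \<subseteq> {x\<in>S. Suc y \<le> x \<and> x < Suc sm}"
          using finE unfolding sm_def by (auto simp: less_Suc_eq_le E_def)
        show "{x\<in>S. Suc y \<le> x \<and> x < Suc sm} \<subseteq> E" using sm by (auto simp: E_def)
      qed
      then have cE: "card E = cnt S (Suc sm) - cnt S (Suc y)" using cnt_interval[OF fS] sm by simp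
      have "{a\<in>T. Suc y \<le> a \<and> a < sm} \<subseteq> {a\<in>T. y<a \<and> a<u}" using sm by auto
      then have "card {a\<in>T. Suc y \<le> a \<and> a < sm} \<le> card {a\<in>T. y<a \<and> a<u}"
        using fT by (intro card_mono) auto
      then have cT: "cnt T sm - cnt T (Suc y) \<le> card {a\<in>T. y<a \<and> a<u}"
        using cnt_interval[OF fT, of "Suc y" sm] sm by simp
      have "cnt T (Suc y) = cnt T y + 1" using cnt_Suc[OF fT] yT by simp
      moreover have "cnt S (Suc sm) = cnt S sm + 1" using cnt_Suc[OF fS] sm by simp
      moreover have "cnt S sm < cnt T sm - 1" using H2 sm by fastforce
      moreover have "cnt S (Suc y) \<le> cnt S (Suc sm)" using cnt_mono[OF fS] sm by simp
      ultimately show ?thesis using cE cT C by linarith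
    qed simp
    ultimately show ?thesis by linarith
  qed
  have srt: "sorted_wrt (>) (rev (sorted_list_of_set S'))" if "finite S'" for S'
    using strict_sorted_list_of_set[of S'] by (simp add: sorted_wrt_rev)
  have notin: "y \<notin> tri T S'" if "S' \<subseteq> S" for S'
  proof -
    have fS': "finite S'" using that fS finite_subset by auto
    show ?thesis unfolding tri_def
      by (rule pick_unpicked[OF srt[OF fS'] yT]) (use Ap[OF that] fS' in simp)
  qed
  have P3: "\<forall>S'. S' \<subseteq> S \<longrightarrow> tri (T - {y}) S' = tri T S'"
    using notin pick_remove unfolding tri_def by blast
  define P where "P = tri T S"
  have PT: "P \<subseteq> T" unfolding P_def tri_def by (rule pick_sub)
  have fP: "finite P" using PT fT finite_subset by auto
  have lowP: "t \<in> P" if t: "t \<in> T" "t < y" for t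
  proof -
    obtain s where s: "s \<in> S" "t < s" "cnt T s = cnt S s + 1" using H3 t by auto
    have e1: "{x\<in>S. t<x \<and> x\<le>s} = {x\<in>S. Suc t \<le> x \<and> x < Suc s}" by auto
    have c1: "card {x\<in>S. t<x \<and> x\<le>s} = cnt S s + 1 - cnt S (Suc t)"
      unfolding e1 using cnt_interval[OF fS, of "Suc t" "Suc s"] cnt_Suc[OF fS, of s] s by simp
    have e2: "{a\<in>T. t<a \<and> a<s} = {a\<in>T. Suc t \<le> a \<and> a < s}" by auto
    have c2: "card {a\<in>T. t<a \<and> a<s} = cnt T s - (cnt T t + 1)"
      unfolding e2 using cnt_interval[OF fT, of "Suc t" s] cnt_Suc[OF fT, of t] s t by simp
    have "cnt T (Suc t) \<le> cnt T s" using cnt_mono[OF fT, of "Suc t" s] s(2) by simp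
    then have "cnt T t + 1 \<le> cnt T s" using cnt_Suc[OF fT, of t] t by simp
    moreover have "cnt S (Suc t) \<le> cnt T t" using D .
    ultimately have "card {a\<in>T. t<a \<and> a<s} < card {x\<in>S. t<x \<and> x\<le>s}"
      using c1 c2 s by linarith
    then show ?thesis unfolding P_def tri_def
      by (intro pick_picked[OF srt[OF fS] t(1)]) (use fS in simp)
  qed
  have P1: "\<forall>j\<in>{1..card T}. nth_el T j < y \<longrightarrow> j \<le> card P \<and> nth_el P j = nth_el T j"
  proof (intro ballI impI)
    fix j assume j: "j \<in> {1..card T}" and xy: "nth_el T j < y"
    define x where "x = nth_el T j"
    have xT: "x \<in> T" and cx: "cnt T x = j - 1" using nth_el_in[OF fT] j unfolding x_def by auto
    have xP: "x \<in> P" using lowP xT xy x_def by auto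
    have "{a\<in>P. a < x} = {a\<in>T. a < x}" using PT lowP xy x_def by auto
    then have "cnt P x = j - 1" using cx unfolding cnt_def by simp
    then show "j \<le> card P \<and> nth_el P j = nth_el T j"
      using nth_el_cnt[OF fP xP] j x_def by auto
  qed
  show ?thesis using P1 P3 notin[of S] unfolding P_def by auto
qed

end
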